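(* Let $\bm\sigma=\sigma_1\bm e_1+\dots+\sigma_r\bm e_r\in\mathbb{Z}^r$ be a changemaker vector with non-trivial stable coefficients ($\sigma_r\ge2$) such that $L=\langle\bm\sigma\rangle^\perp\subseteq\mathbb{Z}^r$ admits an obtuse superbase. Suppose that for some $k$ the coefficients satisfy $\sigma_k=\sigma_{k+1}=\sigma_{k+2}=\sigma_{k+3}$. If $\bm z=\sum z_i\bm e_i\in L$ is an irreducible vector with $z_k=z_{k+1}$ and $z_{k+2}=z_{k+3}$, then $z_{k+2}=z_{k+1}$.
   Context: $\mathbb{Z}^r$ has the standard pairing. A changemaker vector is $\bm\sigma=\sum\sigma_i\bm e_i$ with $\sigma_1=1$ and $\sigma_{i-1}\le\sigma_i\le1+\sigma_1+\dots+\sigma_{i-1}$. An obtuse superbase of a rank-$k$ lattice is a spanning set $\{v_0,\dots,v_k\}$ with $v_i\cdot v_j\le0$ for $i\ne j$ and $\sum v_i=0$. A non-zero $v\in L$ is irreducible if whenever $v=x+y$ with $x,y\in L$ non-zero, $x\cdot y\le -1$. *)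

theory Defs
  imports Main
begin

text \<open>Vectors of Z^r are modelled as functions nat => int supported on {1..r};
  the i-th coordinate of z is z i, for 1 <= i <= r.\<close>

definition zvec :: "nat \<Rightarrow> (nat \<Rightarrow> int) set" where
  "zvec r = {z. \<forall>i. i \<notin> {1..r} \<longrightarrow> z i = 0}"

definition pairing :: "nat \<Rightarrow> (nat \<Rightarrow> int) \<Rightarrow> (nat \<Rightarrow> int) \<Rightarrow> int" where
  "pairing r x y = (\<Sum>i=1..r. x i * y i)"

definition changemaker :: "nat \<Rightarrow> (nat \<Rightarrow> int) \<Rightarrow> bool" where
  "changemaker r \<sigma> \<longleftrightarrow> r \<ge> 1 \<and> \<sigma> \<in> zvec r \<and> \<sigma> 1 = 1 \<and>
     (\<forall>i. 2 \<le> i \<and> i \<le> r \<longrightarrow> \<sigma> (i - 1) \<le> \<sigma> i \<and> \<sigma> i \<le> 1 + (\<Sum>j=1..i-1. \<sigma> j))"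

definition orth_lattice :: "nat \<Rightarrow> (nat \<Rightarrow> int) \<Rightarrow> (nat \<Rightarrow> int) set" where
  "orth_lattice r \<sigma> = {z \<in> zvec r. pairing r z \<sigma> = 0}"

definition obtuse_superbase ::
  "nat \<Rightarrow> (nat \<Rightarrow> int) set \<Rightarrow> nat \<Rightarrow> (nat \<Rightarrow> nat \<Rightarrow> int) \<Rightarrow> bool" where
  "obtuse_superbase r L k v \<longleftrightarrow>
     (\<forall>i\<le>k. v i \<in> L) \<and>
     (\<forall>z\<in>L. \<exists>c :: nat \<Rightarrow> int. z = (\<lambda>j. \<Sum>i\<le>k. c i * v i j)) \<and>
     (\<forall>i\<le>k. \<forall>j\<le>k. i \<noteq> j \<longrightarrow> pairing r (v i) (v j) \<le> 0) \<and>
     (\<lambda>j. \<Sum>i\<le>k. v i j) = (\<lambda>j. 0)"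

definition irreducible_vec :: "nat \<Rightarrow> (nat \<Rightarrow> int) set \<Rightarrow> (nat \<Rightarrow> int) \<Rightarrow> bool" where
  "irreducible_vec r L v \<longleftrightarrow> v \<in> L \<and> v \<noteq> (\<lambda>j. 0) \<and>
     (\<forall>x\<in>L. \<forall>y\<in>L. x \<noteq> (\<lambda>j. 0) \<and> y \<noteq> (\<lambda>j. 0) \<and> v = (\<lambda>j. x j + y j)
        \<longrightarrow> pairing r x y \<le> -1)"

end

theory Submission imports Defs begin

definition vc :: "(nat \<Rightarrow> nat \<Rightarrow> int) \<Rightarrow> nat \<Rightarrow> (nat \<Rightarrow> int) \<Rightarrow> nat \<Rightarrow> int" where
  "vc v n c = (\<lambda>j. \<Sum>i\<le>n. c i * v i j)"
definition WW :: "nat \<Rightarrow> (nat \<Rightarrow> nat \<Rightarrow> int) \<Rightarrow> nat \<Rightarrow> nat \<Rightarrow> int" where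
  "WW r v a b = - pairing r (v a) (v b)"
definition PS :: "nat \<Rightarrow> (nat \<Rightarrow> nat \<Rightarrow> int) \<Rightarrow> int" where
  "PS n g = (\<Sum>a\<le>n. \<Sum>b\<le>n. g a b)"
definition ind :: "nat set \<Rightarrow> nat \<Rightarrow> int" where
  "ind X = (\<lambda>i. if i \<in> X then 1 else 0)"

lemma pairing_sym: "pairing r x y = pairing r y x"
  unfolding pairing_def by (simp add: mult.commute)

lemma pairing_add2: "pairing r x (\<lambda>j. y j + w j) = pairing r x y + pairing r x w"
  unfolding pairing_def by (simp add: distrib_left sum.distrib)

lemma pairing_diff2: "pairing r x (\<lambda>j. y j - w j) = pairing r x y - pairing r x w"
  unfolding pairing_def by (simp add: right_diff_distrib sum_subtractf)

lemma pairing_neg2: "pairing r x (\<lambda>j. - y j) = - pairing r x y"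
  unfolding pairing_def by (simp add: sum_negf)

definition ee :: "nat \<Rightarrow> nat \<Rightarrow> int" where "ee a = (\<lambda>j. if j = a then 1 else 0)"

lemma pairing_ee: "a \<in> {1..r} \<Longrightarrow> pairing r x (ee a) = x a"
  unfolding pairing_def ee_def by (simp add: if_distrib cong: if_cong)

lemma PS_mono: "(\<And>a b. a \<le> n \<Longrightarrow> b \<le> n \<Longrightarrow> f a b \<le> g a b) \<Longrightarrow> PS n f \<le> PS n g"
  unfolding PS_def by (intro sum_mono) auto

lemma PS_add: "PS n (\<lambda>a b. f a b + g a b) = PS n f + PS n g"
  unfolding PS_def by (simp add: sum.distrib)

lemma PS_diff: "PS n (\<lambda>a b. f a b - g a b) = PS n f - PS n g"
  unfolding PS_def by (simp add: sum_subtractf)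

lemma PS_cong: "(\<And>a b. a \<le> n \<Longrightarrow> b \<le> n \<Longrightarrow> f a b = g a b) \<Longrightarrow> PS n f = PS n g"
  unfolding PS_def by (intro sum.cong) auto

lemma PS_abs: "\<bar>PS n f\<bar> \<le> PS n (\<lambda>a b. \<bar>f a b\<bar>)"
proof -
  have "\<bar>PS n f\<bar> \<le> (\<Sum>a\<le>n. \<bar>\<Sum>b\<le>n. f a b\<bar>)" unfolding PS_def by (rule sum_abs)
  also have "\<dots> \<le> (\<Sum>a\<le>n. \<Sum>b\<le>n. \<bar>f a b\<bar>)" by (intro sum_mono sum_abs)
  finally show ?thesis unfolding PS_def .
qed

lemma PS_two:
  assumes nn: "\<And>a b. a \<le> n \<Longrightarrow> b \<le> n \<Longrightarrow> 0 \<le> g a b"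
    and "i \<le> n" "j \<le> n" "i \<noteq> j"
  shows "g i j + g j i \<le> PS n g"
proof -
  have "g i j \<le> (\<Sum>b\<le>n. g i b)" using assms by (intro member_le_sum) auto
  moreover have "g j i \<le> (\<Sum>b\<le>n. g j b)" using assms by (intro member_le_sum) auto
  moreover have "(\<Sum>b\<le>n. g i b) + (\<Sum>b\<le>n. g j b) = (\<Sum>a\<in>{i,j}. \<Sum>b\<le>n. g a b)"
    using assms by simp
  moreover have "(\<Sum>a\<in>{i,j}. \<Sum>b\<le>n. g a b) \<le> (\<Sum>a\<le>n. \<Sum>b\<le>n. g a b)"
    using assms by (intro sum_mono2) (auto intro: sum_nonneg)
  ultimately show ?thesis unfolding PS_def by linarith
qed

lemma PS_nonneg: "(\<And>a b. a \<le> n \<Longrightarrow> b \<le> n \<Longrightarrow> 0 \<le> g a b) \<Longrightarrow> 0 \<le> PS n g"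
  unfolding PS_def by (intro sum_nonneg) auto

lemma PS_zero:
  assumes nn: "\<And>a b. a \<le> n \<Longrightarrow> b \<le> n \<Longrightarrow> 0 \<le> g a b" and z: "PS n g = 0"
    and "i \<le> n" "j \<le> n"
  shows "g i j = 0"
proof -
  have "(\<Sum>b\<le>n. g i b) = 0"
    using z nn assms(3) unfolding PS_def
    by (subst (asm) sum_nonneg_eq_0_iff) (auto intro: sum_nonneg)
  then show ?thesis using nn assms(3,4)
    by (subst (asm) sum_nonneg_eq_0_iff) auto
qed

lemma PS_pos_ex: "0 < PS n g \<Longrightarrow> \<exists>a\<le>n. \<exists>b\<le>n. 0 < g a b"
proof (rule ccontr)
  assume "0 < PS n g" "\<not> (\<exists>a\<le>n. \<exists>b\<le>n. 0 < g a b)"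
  then have "PS n g \<le> PS n (\<lambda>a b. 0)" by (intro PS_mono) (auto simp: not_less)
  then show False using \<open>0 < PS n g\<close> by (simp add: PS_def)
qed


lemma pairing_sum2: "pairing r x (\<lambda>j. \<Sum>b\<in>B. f b j) = (\<Sum>b\<in>B. pairing r x (f b))"
  unfolding pairing_def by (simp add: sum_distrib_left sum.swap[of _ B])

lemma pairing_scale2: "pairing r x (\<lambda>j. t * y j) = t * pairing r x y"
  unfolding pairing_def by (simp add: sum_distrib_left algebra_simps)

lemma pairing_vc: "pairing r (vc v n c) (vc v n d) =
   (\<Sum>a\<le>n. \<Sum>b\<le>n. c a * d b * pairing r (v a) (v b))"
proof -
  have "pairing r (vc v n c) (vc v n d) = (\<Sum>j=1..r. \<Sum>a\<le>n. \<Sum>b\<le>n. (c a * v a j) * (d b * v b j))"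
    unfolding pairing_def vc_def by (simp add: sum_product)
  also have "\<dots> = (\<Sum>a\<le>n. \<Sum>j=1..r. \<Sum>b\<le>n. (c a * v a j) * (d b * v b j))"
    by (rule sum.swap)
  also have "\<dots> = (\<Sum>a\<le>n. \<Sum>b\<le>n. \<Sum>j=1..r. (c a * v a j) * (d b * v b j))"
    by (intro sum.cong refl sum.swap)
  also have "\<dots> = (\<Sum>a\<le>n. \<Sum>b\<le>n. c a * d b * pairing r (v a) (v b))"
    unfolding pairing_def by (intro sum.cong refl) (simp add: sum_distrib_left algebra_simps)
  finally show ?thesis .
qed

context
  fixes r :: nat and \<sigma> :: "nat \<Rightarrow> int" and v :: "nat \<Rightarrow> nat \<Rightarrow> int" and n :: nat
  assumes vin: "\<forall>i\<le>n. v i \<in> orth_lattice r \<sigma>"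
  and vspan: "\<forall>z\<in>orth_lattice r \<sigma>. \<exists>c :: nat \<Rightarrow> int. z = (\<lambda>j. \<Sum>i\<le>n. c i * v i j)"
  and vobt: "\<forall>i\<le>n. \<forall>j\<le>n. i \<noteq> j \<longrightarrow> pairing r (v i) (v j) \<le> 0"
  and vsum: "(\<lambda>j. \<Sum>i\<le>n. v i j) = (\<lambda>j. 0)"
begin

lemma vsum': "(\<Sum>i\<le>n. v i j) = 0"
  using fun_cong[OF vsum, of j] by simp

lemma vc_span: "z \<in> orth_lattice r \<sigma> \<Longrightarrow> \<exists>c. z = vc v n c"
  using vspan unfolding vc_def by blast

lemma vc_in: "vc v n c \<in> orth_lattice r \<sigma>"
proof -
  have z: "\<forall>i\<le>n. v i \<in> zvec r" and o: "\<forall>i\<le>n. pairing r (v i) \<sigma> = 0"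
    using vin unfolding orth_lattice_def by auto
  have "vc v n c \<in> zvec r"
    using z unfolding zvec_def vc_def by auto
  moreover have "pairing r (vc v n c) \<sigma> = 0"
  proof -
    have "pairing r (vc v n c) \<sigma> = (\<Sum>i\<le>n. c i * pairing r (v i) \<sigma>)"
      unfolding vc_def pairing_def
      by (simp add: sum_distrib_left sum_distrib_right algebra_simps) (rule sum.swap)
    also have "\<dots> = 0" using o by simp
    finally show ?thesis .
  qed
  ultimately show ?thesis unfolding orth_lattice_def by auto
qed

lemma vc_add: "vc v n (\<lambda>i. c i + d i) = (\<lambda>j. vc v n c j + vc v n d j)"
  unfolding vc_def by (simp add: distrib_right sum.distrib)

lemma vc_diff: "vc v n (\<lambda>i. c i - d i) = (\<lambda>j. vc v n c j - vc v n d j)"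
  unfolding vc_def by (simp add: left_diff_distrib sum_subtractf)

lemma vc_shift: "vc v n (\<lambda>i. c i + t) = vc v n c"
proof -
  have "vc v n (\<lambda>i. c i + t) = (\<lambda>j. vc v n c j + t * (\<Sum>i\<le>n. v i j))"
    unfolding vc_def by (simp add: distrib_right sum.distrib sum_distrib_left)
  then show ?thesis using vsum' by simp
qed

lemma W_sym: "WW r v a b = WW r v b a"
  unfolding WW_def by (simp add: pairing_sym)

lemma W_nonneg: "a \<le> n \<Longrightarrow> b \<le> n \<Longrightarrow> a \<noteq> b \<Longrightarrow> 0 \<le> WW r v a b"
  unfolding WW_def using vobt by auto

lemma rowsum: "a \<le> n \<Longrightarrow> (\<Sum>b\<le>n. pairing r (v a) (v b)) = 0"
proof -
  have "(\<Sum>b\<le>n. pairing r (v a) (v b)) = pairing r (v a) (\<lambda>j. \<Sum>b\<le>n. v b j)"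
    by (simp add: pairing_sum2)
  also have "\<dots> = 0" using vsum' unfolding pairing_def by simp
  finally show ?thesis .
qed

lemma formula: "PS n (\<lambda>a b. WW r v a b * (c a - c b) * (d a - d b)) = 2 * pairing r (vc v n c) (vc v n d)"
proof -
  define G where "G a b = pairing r (v a) (v b)" for a b
  have Gs: "G a b = G b a" for a b unfolding G_def by (simp add: pairing_sym)
  have row: "(\<Sum>b\<le>n. G a b) = 0" if "a \<le> n" for a using rowsum that unfolding G_def by simp
  have col: "(\<Sum>a\<le>n. G a b) = 0" if "b \<le> n" for b using row[OF that] by (simp add: Gs)
  have P: "pairing r (vc v n c) (vc v n d) = (\<Sum>a\<le>n. \<Sum>b\<le>n. c a * d b * G a b)"
    unfolding G_def by (rule pairing_vc)
  have e: "WW r v a b * (c a - c b) * (d a - d b) =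
     c a * d b * G a b + c b * d a * G a b - c a * d a * G a b - c b * d b * G a b" for a b
    unfolding WW_def G_def by (simp add: algebra_simps)
  have t1: "PS n (\<lambda>a b. c a * d a * G a b) = 0"
    unfolding PS_def by (simp add: sum_distrib_left[symmetric] row)
  have t2: "PS n (\<lambda>a b. c b * d b * G a b) = 0"
    unfolding PS_def by (subst sum.swap) (simp add: sum_distrib_left[symmetric] col)
  have t3: "PS n (\<lambda>a b. c b * d a * G a b) = (\<Sum>a\<le>n. \<Sum>b\<le>n. c a * d b * G a b)"
    unfolding PS_def by (subst sum.swap) (simp add: Gs mult.commute)
  have "PS n (\<lambda>a b. WW r v a b * (c a - c b) * (d a - d b)) =
     PS n (\<lambda>a b. c a * d b * G a b) + PS n (\<lambda>a b. c b * d a * G a b)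
     - PS n (\<lambda>a b. c a * d a * G a b) - PS n (\<lambda>a b. c b * d b * G a b)"
    unfolding e by (simp add: PS_add PS_diff)
  also have "\<dots> = 2 * pairing r (vc v n c) (vc v n d)"
    using t1 t2 t3 P by (simp add: PS_def)
  finally show ?thesis .
qed


lemma vc_zero: "(\<forall>i\<le>n. c i = 0) \<Longrightarrow> vc v n c = (\<lambda>j. 0)"
  unfolding vc_def by simp

lemma cut_rep_aux:
  "\<forall>c. (\<forall>i\<le>n. 0 \<le> c i) \<longrightarrow> nat (\<Sum>i\<le>n. c i) = N \<longrightarrow> z = vc v n c \<longrightarrow>
     irreducible_vec r (orth_lattice r \<sigma>) z \<longrightarrow> (\<exists>X. z = vc v n (ind X))"
proof (induction N rule: less_induct)
  case (less N)
  show ?case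
  proof (intro allI impI)
    fix c :: "nat \<Rightarrow> int"
    assume c0: "\<forall>i\<le>n. 0 \<le> c i" and cN: "nat (\<Sum>i\<le>n. c i) = N" and zc: "z = vc v n c"
      and irr: "irreducible_vec r (orth_lattice r \<sigma>) z"
    define T where "T = {i. 1 \<le> c i}"
    define d where "d i = c i - ind T i" for i
    define x where "x = vc v n (ind T)"
    define y where "y = vc v n d"
    have xL: "x \<in> orth_lattice r \<sigma>" unfolding x_def by (rule vc_in)
    have yL: "y \<in> orth_lattice r \<sigma>" unfolding y_def by (rule vc_in)
    have zxy: "z = (\<lambda>j. x j + y j)"
      unfolding x_def y_def zc vc_add[symmetric] d_def by simp
    have "0 \<le> PS n (\<lambda>a b. WW r v a b * (ind T a - ind T b) * (d a - d b))"
    proof (rule PS_nonneg)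
      fix a b assume ab: "a \<le> n" "b \<le> n"
      show "0 \<le> WW r v a b * (ind T a - ind T b) * (d a - d b)"
      proof (cases "a = b")
        case True then show ?thesis by simp
      next
        case False
        then have W: "0 \<le> WW r v a b" using W_nonneg ab by auto
        have "0 \<le> (ind T a - ind T b) * (d a - d b)"
          using c0 ab unfolding d_def ind_def T_def
          by (cases "1 \<le> c a"; cases "1 \<le> c b") (auto simp: mult_nonneg_nonneg)
        then show ?thesis using W by (simp add: mult.assoc)
      qed
    qed
    then have pxy: "0 \<le> pairing r x y" unfolding x_def y_def formula by simp
    have "x = (\<lambda>j. 0) \<or> y = (\<lambda>j. 0)"
    proof (rule ccontr)
      assume "\<not> (x = (\<lambda>j. 0) \<or> y = (\<lambda>j. 0))"
      then have "pairing r x y \<le> -1"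
        using irr xL yL zxy unfolding irreducible_vec_def by blast
      then show False using pxy by simp
    qed
    then show "\<exists>X. z = vc v n (ind X)"
    proof
      assume "y = (\<lambda>j. 0)"
      then have "z = x" using zxy by simp
      then show ?thesis unfolding x_def by blast
    next
      assume x0: "x = (\<lambda>j. 0)"
      then have zy: "z = vc v n d" using zxy y_def by simp
      have "z \<noteq> (\<lambda>j. 0)" using irr unfolding irreducible_vec_def by simp
      then obtain i0 where i0: "i0 \<le> n" "c i0 \<noteq> 0" using vc_zero zc by blast
      then have i0T: "i0 \<in> T" using c0 unfolding T_def by force
      have d0: "\<forall>i\<le>n. 0 \<le> d i" using c0 unfolding d_def ind_def T_def by auto
      have "(\<Sum>i\<le>n. d i) = (\<Sum>i\<le>n. c i) - (\<Sum>i\<le>n. ind T i)"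
        unfolding d_def by (simp add: sum_subtractf)
      moreover have "1 \<le> (\<Sum>i\<le>n. ind T i)"
      proof -
        have "ind T i0 \<le> (\<Sum>i\<le>n. ind T i)"
          using i0 by (intro member_le_sum) (auto simp: ind_def)
        then show ?thesis using i0T by (simp add: ind_def)
      qed
      moreover have "0 \<le> (\<Sum>i\<le>n. d i)" using d0 by (intro sum_nonneg) auto
      ultimately have "nat (\<Sum>i\<le>n. d i) < N" using cN by linarith
      then show ?thesis using less.IH d0 zy irr by blast
    qed
  qed
qed

lemma cut_rep:
  assumes irr: "irreducible_vec r (orth_lattice r \<sigma>) z"
  shows "\<exists>X. z = vc v n (ind X)"
proof -
  have "z \<in> orth_lattice r \<sigma>" using irr unfolding irreducible_vec_def by simp
  then obtain c where zc: "z = vc v n c" using vc_span by blast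
  define m where "m = Min (c ` {..n})"
  have "\<forall>i\<le>n. m \<le> c i" unfolding m_def by (auto intro: Min_le)
  then have c0: "\<forall>i\<le>n. 0 \<le> c i + (- m)" by auto
  have "z = vc v n (\<lambda>i. c i + (- m))" unfolding zc by (rule vc_shift[symmetric])
  then show ?thesis using cut_rep_aux[of "nat (\<Sum>i\<le>n. c i + (- m))" z] c0 irr by simp
qed


lemma PSW_nonneg: "(\<And>a b. a \<le> n \<Longrightarrow> b \<le> n \<Longrightarrow> a \<noteq> b \<Longrightarrow> 0 \<le> f a b) \<Longrightarrow>
    (\<And>a. a \<le> n \<Longrightarrow> f a a = 0) \<Longrightarrow> a \<le> n \<Longrightarrow> b \<le> n \<Longrightarrow> 0 \<le> WW r v a b * f a b"
  by (cases "a = b") (auto intro!: mult_nonneg_nonneg W_nonneg)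

lemma W_self_le: "WW r v a a \<le> 0"
  unfolding WW_def pairing_def by (simp add: sum_nonneg)

lemma sq_le2: "(x::int) * x \<le> 2 \<Longrightarrow> \<bar>x\<bar> \<le> 1"
proof (rule ccontr)
  assume "x * x \<le> 2" "\<not> \<bar>x\<bar> \<le> 1"
  then have "2 \<le> \<bar>x\<bar>" by simp
  then have "2 * 2 \<le> \<bar>x\<bar> * \<bar>x\<bar>" by (intro mult_mono) auto
  then show False using \<open>x * x \<le> 2\<close> by (simp add: abs_mult_self_eq)
qed

lemma root_bound:
  assumes pp: "PS n (\<lambda>a b. WW r v a b * (p a - p b) * (p a - p b)) = 4"
    and ab: "a \<le> n" "b \<le> n" "0 < WW r v a b"
  shows "\<bar>p a - p b\<bar> \<le> 1"
proof -
  have ne: "a \<noteq> b" using ab(3) W_self_le[of a] by auto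
  have "WW r v a b * (p a - p b) * (p a - p b) + WW r v b a * (p b - p a) * (p b - p a) \<le> 4"
    using pp ab ne
    by (subst pp[symmetric], intro PS_two) (auto intro!: PSW_nonneg[simplified mult.assoc] simp: mult.assoc)
  then have "WW r v a b * ((p a - p b) * (p a - p b)) \<le> 2" using W_sym[of a b]
    by (simp add: algebra_simps)
  moreover have "(p a - p b) * (p a - p b) \<le> WW r v a b * ((p a - p b) * (p a - p b))"
    using ab(3) by (simp add: mult_le_cancel_right1)
  ultimately have "(p a - p b) * (p a - p b) \<le> 2" by linarith
  then show ?thesis using sq_le2 by blast
qed


lemma W_pos_ne: "0 < WW r v a b \<Longrightarrow> a \<noteq> b"
  using W_self_le[of a] by auto

lemma ind_norm_ge:
  assumes "i \<le> n" "j \<le> n" "0 < WW r v i j" "i \<in> S" "j \<notin> S"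
  shows "1 \<le> pairing r (vc v n (ind S)) (vc v n (ind S))"
proof -
  have ne: "i \<noteq> j" using W_pos_ne assms(3) .
  have "WW r v i j * (ind S i - ind S j) * (ind S i - ind S j) + WW r v j i * (ind S j - ind S i) * (ind S j - ind S i)
      \<le> PS n (\<lambda>a b. WW r v a b * (ind S a - ind S b) * (ind S a - ind S b))"
    using assms ne by (intro PS_two) (auto intro!: PSW_nonneg[simplified mult.assoc] simp: mult.assoc)
  then have "2 * WW r v i j \<le> 2 * pairing r (vc v n (ind S)) (vc v n (ind S))"
    using assms W_sym[of j i] unfolding formula by (simp add: ind_def)
  then show ?thesis using assms(3) by linarith
qed

lemma abs_zp: "\<bar>z::int\<bar> \<le> 1 \<Longrightarrow> \<bar>z * p\<bar> \<le> p * p"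
proof -
  assume z: "\<bar>z\<bar> \<le> 1"
  have "\<bar>z * p\<bar> \<le> \<bar>p\<bar>" using z by (simp add: abs_mult mult_left_le_one_le)
  also have "\<bar>p\<bar> \<le> p * p"
  proof (cases "p = 0")
    case False
    then have "1 \<le> \<bar>p\<bar>" by simp
    then have "\<bar>p\<bar> * 1 \<le> \<bar>p\<bar> * \<bar>p\<bar>" by (intro mult_left_mono) auto
    then show ?thesis by (metis abs_mult_self_eq mult.right_neutral)
  qed simp
  finally show ?thesis .
qed

lemma lemD:
  assumes no1: "\<forall>x\<in>orth_lattice r \<sigma>. pairing r x x \<noteq> 1"
    and irr: "irreducible_vec r (orth_lattice r \<sigma>) (vc v n (ind X))"
    and pp: "PS n (\<lambda>a b. WW r v a b * (p a - p b) * (p a - p b)) = 4"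
    and zp: "PS n (\<lambda>a b. WW r v a b * (ind X a - ind X b) * (p a - p b)) = 0"
    and ex: "a0 \<le> n" "b0 \<le> n" "0 < WW r v a0 b0" "(ind X a0 - ind X b0) * (p a0 - p b0) \<noteq> 0"
  shows False
proof -
  define W where "W = WW r v"
  define Z where "Z a b = ind X a - ind X b" for a b
  define P where "P a b = p a - p b" for a b
  define g where "g a b = Z a b * P a b" for a b
  have Wsym: "W a b = W b a" for a b unfolding W_def by (rule W_sym)
  have gsym: "g a b = g b a" for a b unfolding g_def Z_def P_def by (simp add: algebra_simps)
  have Wnn: "a \<le> n \<Longrightarrow> b \<le> n \<Longrightarrow> a \<noteq> b \<Longrightarrow> 0 \<le> W a b" for a b unfolding W_def by (rule W_nonneg)
  have Wne: "0 < W a b \<Longrightarrow> a \<noteq> b" for a b unfolding W_def by (rule W_pos_ne)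
  have Pb: "a \<le> n \<Longrightarrow> b \<le> n \<Longrightarrow> 0 < W a b \<Longrightarrow> \<bar>P a b\<bar> \<le> 1" for a b
    unfolding W_def P_def using root_bound[OF pp] by blast
  have Zb: "\<bar>Z a b\<bar> \<le> 1" for a b unfolding Z_def ind_def by auto
  have Zv: "Z a b = 0 \<or> Z a b = 1 \<or> Z a b = -1" for a b unfolding Z_def ind_def by auto
  have Pv: "a \<le> n \<Longrightarrow> b \<le> n \<Longrightarrow> 0 < W a b \<Longrightarrow> P a b = 0 \<or> P a b = 1 \<or> P a b = -1" for a b
    using Pb[of a b] by (auto simp: abs_le_iff)
  define pos where "pos = PS n (\<lambda>a b. W a b * max (g a b) 0)"
  define neg where "neg = PS n (\<lambda>a b. W a b * max (- g a b) 0)"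
  have "pos - neg = PS n (\<lambda>a b. W a b * g a b)"
    unfolding pos_def neg_def PS_diff[symmetric]
    by (intro PS_cong) (simp add: right_diff_distrib[symmetric] max_def)
  also have "\<dots> = 0" using zp unfolding W_def g_def Z_def P_def by (simp add: mult.assoc)
  finally have pn: "pos = neg" by simp
  have nn: "0 \<le> W a b * max (c * g a b) 0" if "a \<le> n" "b \<le> n" for a b c
    using that Wnn by (cases "a = b") (auto intro!: mult_nonneg_nonneg simp: g_def P_def)
  have sumle: "pos + neg \<le> 4"
  proof -
    have "pos + neg = PS n (\<lambda>a b. W a b * \<bar>g a b\<bar>)"
      unfolding pos_def neg_def PS_add[symmetric]
      by (intro PS_cong) (simp add: distrib_left[symmetric] max_def)
    also have "\<dots> \<le> PS n (\<lambda>a b. W a b * (P a b * P a b))"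
    proof (rule PS_mono)
      fix a b assume ab: "a \<le> n" "b \<le> n"
      show "W a b * \<bar>g a b\<bar> \<le> W a b * (P a b * P a b)"
      proof (cases "a = b")
        case True then show ?thesis by (simp add: g_def P_def)
      next
        case False
        have "\<bar>g a b\<bar> \<le> P a b * P a b"
          using Zb[of a b] unfolding g_def by (rule abs_zp)
        then show ?thesis using Wnn[OF ab False] by (rule mult_left_mono) 
      qed
    qed
    also have "\<dots> = 4" using pp unfolding W_def P_def by (simp add: mult.assoc)
    finally show ?thesis .
  qed
  have ne0: "a0 \<noteq> b0" using Wne ex(3) unfolding W_def by blast
  have W1: "1 \<le> W a0 b0" using ex(3) unfolding W_def by simp
  have g0: "g a0 b0 \<noteq> 0" using ex(4) unfolding g_def Z_def P_def .
  have "2 \<le> pos \<or> 2 \<le> neg"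
  proof (cases "0 < g a0 b0")
    case True
    have "W a0 b0 * max (g a0 b0) 0 + W b0 a0 * max (g b0 a0) 0 \<le> pos"
      unfolding pos_def using ex ne0 nn[of _ _ 1] by (intro PS_two) auto
    moreover have "1 \<le> max (g a0 b0) 0" using True by simp
    moreover have "W a0 b0 * 1 \<le> W a0 b0 * max (g a0 b0) 0"
      using W1 \<open>1 \<le> max (g a0 b0) 0\<close> by (intro mult_left_mono) auto
    moreover have "W b0 a0 * max (g b0 a0) 0 = W a0 b0 * max (g a0 b0) 0"
      using Wsym[of a0 b0] gsym[of a0 b0] by simp
    ultimately have "2 * W a0 b0 \<le> pos" by linarith
    then show ?thesis using W1 by simp
  next
    case False
    then have gn: "g a0 b0 < 0" using g0 by simp
    have "W a0 b0 * max (- g a0 b0) 0 + W b0 a0 * max (- g b0 a0) 0 \<le> neg"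
      unfolding neg_def using ex ne0 nn[of _ _ "-1"] by (intro PS_two) auto
    moreover have "1 \<le> max (- g a0 b0) 0" using gn by simp
    moreover have "W a0 b0 * 1 \<le> W a0 b0 * max (- g a0 b0) 0"
      using W1 \<open>1 \<le> max (- g a0 b0) 0\<close> by (intro mult_left_mono) auto
    moreover have "W b0 a0 * max (- g b0 a0) 0 = W a0 b0 * max (- g a0 b0) 0"
      using Wsym[of a0 b0] gsym[of a0 b0] by simp
    ultimately have "2 * W a0 b0 \<le> neg" by linarith
    then show ?thesis using W1 by simp
  qed
  then have pos2: "pos = 2" and neg2: "neg = 2" using pn sumle by auto
  have key: "Z a b \<noteq> 0" if ab: "a \<le> n" "b \<le> n" "0 < W a b" "P a b \<noteq> 0" for a b
  proof -
    have "PS n (\<lambda>a b. W a b * (P a b * P a b - \<bar>g a b\<bar>)) = 0"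
    proof -
      have "PS n (\<lambda>a b. W a b * (P a b * P a b - \<bar>g a b\<bar>)) =
          PS n (\<lambda>a b. W a b * (P a b * P a b)) - PS n (\<lambda>a b. W a b * \<bar>g a b\<bar>)"
        unfolding PS_diff[symmetric] by (simp add: right_diff_distrib)
      moreover have "PS n (\<lambda>a b. W a b * (P a b * P a b)) = 4"
        using pp unfolding W_def P_def by (simp add: mult.assoc)
      moreover have "PS n (\<lambda>a b. W a b * \<bar>g a b\<bar>) = 4"
      proof -
        have "PS n (\<lambda>a b. W a b * \<bar>g a b\<bar>) = pos + neg"
          unfolding pos_def neg_def PS_add[symmetric]
          by (intro PS_cong) (simp add: distrib_left[symmetric] max_def)
        then show ?thesis using pos2 neg2 by simp
      qed
      ultimately show ?thesis by simp
    qed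
    moreover have "0 \<le> W a b * (P a b * P a b - \<bar>g a b\<bar>)" if "a \<le> n" "b \<le> n" for a b
    proof (cases "a = b")
      case True then show ?thesis by (simp add: P_def g_def)
    next
      case False
      have "\<bar>g a b\<bar> \<le> P a b * P a b"
        using Zb[of a b] unfolding g_def by (rule abs_zp)
      then show ?thesis using Wnn[OF that False] by simp
    qed
    ultimately have "W a b * (P a b * P a b - \<bar>g a b\<bar>) = 0"
      using PS_zero[of n "\<lambda>a b. W a b * (P a b * P a b - \<bar>g a b\<bar>)" a b] ab by blast
    then have "P a b * P a b = \<bar>g a b\<bar>" using ab(3) by simp
    then show ?thesis using ab(4) unfolding g_def by auto
  qed
  obtain i0 j0 where ij0: "i0 \<le> n" "j0 \<le> n" "0 < W i0 j0 * max (g i0 j0) 0"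
    using PS_pos_ex[of n "\<lambda>a b. W a b * max (g a b) 0"] pos2 unfolding pos_def by auto
  have Wij0: "0 < W i0 j0" and gij0: "0 < g i0 j0" using ij0(3)
    by (auto simp: max_def zero_less_mult_iff split: if_splits)
  obtain i j where ij: "i \<le> n" "j \<le> n" "0 < W i j" "P i j = 1" "Z i j = 1"
  proof -
    have "P i0 j0 = 1 \<and> Z i0 j0 = 1 \<or> P i0 j0 = -1 \<and> Z i0 j0 = -1"
      using Pv[OF ij0(1,2) Wij0] Zv[of i0 j0] gij0 unfolding g_def by auto
    moreover have "P j0 i0 = - P i0 j0" "Z j0 i0 = - Z i0 j0" unfolding P_def Z_def by auto
    ultimately show ?thesis
    proof (elim disjE conjE)
      assume "P i0 j0 = 1" "Z i0 j0 = 1"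
      then show ?thesis using that[of i0 j0] ij0 Wij0 by blast
    next
      assume "P i0 j0 = -1" "Z i0 j0 = -1" "P j0 i0 = - P i0 j0" "Z j0 i0 = - Z i0 j0"
      then show ?thesis using that[of j0 i0] ij0 Wij0 Wsym[of i0 j0] by simp
    qed
  qed
  have iX: "i \<in> X" and jX: "j \<notin> X" using ij(5) unfolding Z_def ind_def by (auto split: if_splits)
  define t where "t = p i"
  have pj: "p j = t - 1" using ij(4) unfolding P_def t_def by simp
  define S where "S = {a. t \<le> p a}"
  show False
  proof (cases "\<exists>k l. k \<le> n \<and> l \<le> n \<and> 0 < W k l \<and> g k l < 0 \<and> t \<le> p k \<and> p l < t")
    case True
    then obtain k l where kl: "k \<le> n" "l \<le> n" "0 < W k l" "g k l < 0" "t \<le> p k" "p l < t" by blast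
    have "P k l = 1" using Pv[OF kl(1-3)] kl(5,6) unfolding P_def by auto
    then have "Z k l = -1" using kl(4) Zv[of k l] unfolding g_def by auto
    then have kX: "k \<notin> X" and lX: "l \<in> X" unfolding Z_def ind_def by (auto split: if_splits)
    define X1 where "X1 = X \<inter> S"
    define X2 where "X2 = X - S"
    define x1 where "x1 = vc v n (ind X1)"
    define x2 where "x2 = vc v n (ind X2)"
    have zsplit: "vc v n (ind X) = (\<lambda>j. x1 j + x2 j)"
      unfolding x1_def x2_def vc_add[symmetric]
      by (rule arg_cong[where f = "vc v n"]) (auto simp: ind_def X1_def X2_def)
    have "PS n (\<lambda>a b. WW r v a b * (ind X1 a - ind X1 b) * (ind X2 a - ind X2 b)) = PS n (\<lambda>a b. 0)"
    proof (rule PS_cong)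
      fix a b assume ab: "a \<le> n" "b \<le> n"
      show "WW r v a b * (ind X1 a - ind X1 b) * (ind X2 a - ind X2 b) = 0"
      proof (cases "0 < W a b")
        case False
        then have "a = b \<or> W a b = 0" using Wnn[OF ab] by (cases "a = b") auto
        then show ?thesis unfolding W_def by auto
      next
        case True
        show ?thesis
        proof (rule ccontr)
          assume "WW r v a b * (ind X1 a - ind X1 b) * (ind X2 a - ind X2 b) \<noteq> 0"
          then have "(a \<in> X1 \<and> b \<in> X2) \<or> (a \<in> X2 \<and> b \<in> X1)"
            unfolding ind_def X1_def X2_def by (auto split: if_splits)
          then have "a \<in> X" "b \<in> X" "P a b \<noteq> 0"
            unfolding X1_def X2_def S_def P_def by auto
          then show False using key[OF ab True] unfolding Z_def ind_def by simp
        qed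
      qed
    qed
    then have p12: "pairing r x1 x2 = 0" unfolding x1_def x2_def formula by (simp add: PS_def)
    have "x1 \<in> orth_lattice r \<sigma>" "x2 \<in> orth_lattice r \<sigma>" unfolding x1_def x2_def by (rule vc_in)+
    have "x1 = (\<lambda>j. 0) \<or> x2 = (\<lambda>j. 0)"
    proof (rule ccontr)
      assume "\<not> (x1 = (\<lambda>j. 0) \<or> x2 = (\<lambda>j. 0))"
      then have "pairing r x1 x2 \<le> -1"
        using irr zsplit \<open>x1 \<in> orth_lattice r \<sigma>\<close> \<open>x2 \<in> orth_lattice r \<sigma>\<close>
        unfolding irreducible_vec_def by blast
      then show False using \<open>pairing r x1 x2 = 0\<close> by simp
    qed
    moreover have "1 \<le> pairing r x1 x1" unfolding x1_def
      using ij iX jX unfolding W_def X1_def S_def t_def by (intro ind_norm_ge[of i j]) auto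
    moreover have "1 \<le> pairing r x2 x2" unfolding x2_def
      using kl kX lX Wsym[of k l] unfolding W_def X2_def S_def by (intro ind_norm_ge[of l k]) auto
    ultimately show False by (auto simp: pairing_def)
  next
    case False
    have "PS n (\<lambda>a b. WW r v a b * (ind S a - ind S b) * (ind S a - ind S b)) \<le> pos"
      unfolding pos_def
    proof (rule PS_mono)
      fix a b assume ab: "a \<le> n" "b \<le> n"
      show "WW r v a b * (ind S a - ind S b) * (ind S a - ind S b) \<le> W a b * max (g a b) 0"
      proof (cases "0 < W a b")
        case F: False
        then have "a = b \<or> W a b = 0" using Wnn[OF ab] by (cases "a = b") auto
        then show ?thesis unfolding W_def g_def Z_def P_def by auto
      next
        case True
        show ?thesis
        proof (cases "(t \<le> p a) = (t \<le> p b)")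
          case True
          then show ?thesis using \<open>0 < W a b\<close> unfolding W_def ind_def S_def by auto
        next
          case cr: False
          then have "P a b \<noteq> 0" unfolding P_def by auto
          then have "Z a b \<noteq> 0" using key[OF ab True] by blast
          then have "g a b = 1 \<or> g a b = -1"
            using Zv[of a b] Pv[OF ab True] \<open>P a b \<noteq> 0\<close> unfolding g_def by auto
          moreover have "g a b \<noteq> -1"
          proof
            assume gm: "g a b = -1"
            show False
            proof (cases "t \<le> p a")
              case True
              have "\<exists>k l. k \<le> n \<and> l \<le> n \<and> 0 < W k l \<and> g k l < 0 \<and> t \<le> p k \<and> p l < t"
                using ab \<open>0 < W a b\<close> gm cr True by (intro exI[of _ a] exI[of _ b]) auto
              then show False using \<open>\<not> (\<exists>k l. _)\<close> by blast
            next
              case False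
              have "\<exists>k l. k \<le> n \<and> l \<le> n \<and> 0 < W k l \<and> g k l < 0 \<and> t \<le> p k \<and> p l < t"
                using ab \<open>0 < W a b\<close> gm cr False Wsym[of a b] gsym[of a b]
                by (intro exI[of _ b] exI[of _ a]) auto
              then show False using \<open>\<not> (\<exists>k l. _)\<close> by blast
            qed
          qed
          ultimately have "g a b = 1" by simp
          then show ?thesis using cr \<open>0 < W a b\<close> unfolding W_def ind_def S_def by auto
        qed
      qed
    qed
    then have "pairing r (vc v n (ind S)) (vc v n (ind S)) \<le> 1" using pos2 unfolding formula by simp
    moreover have "1 \<le> pairing r (vc v n (ind S)) (vc v n (ind S))"
      using ij pj unfolding W_def S_def t_def by (intro ind_norm_ge[of i j]) auto
    ultimately have "pairing r (vc v n (ind S)) (vc v n (ind S)) = 1" by simp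
    then show False using no1 vc_in[of "ind S"] by blast
  qed
qed


lemma cross2: "((if t \<le> x then 1 else 0) - (if t \<le> y then 1 else 0)) * ((if t \<le> x then 1 else 0) - (if t \<le> y then 1 else (0::int)))
   + ((if t - 1 \<le> x then 1 else 0) - (if t - 1 \<le> y then 1 else 0)) * ((if t - 1 \<le> x then 1 else 0) - (if t - 1 \<le> y then 1 else (0::int)))
   \<le> \<bar>x - y\<bar>"
  for t x y :: int
  by (auto split: if_splits)

lemma lemE:
  assumes no1: "\<forall>x\<in>orth_lattice r \<sigma>. pairing r x x \<noteq> 1"
    and ss: "PS n (\<lambda>a b. WW r v a b * (s a - s b) * (s a - s b)) = 8"
    and ex: "a0 \<le> n" "b0 \<le> n" "0 < WW r v a0 b0" "\<bar>s a0 - s b0\<bar> = 2"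
  shows False
proof -
  define W where "W = WW r v"
  have Wsym: "W a b = W b a" for a b unfolding W_def by (rule W_sym)
  have Wnn: "a \<le> n \<Longrightarrow> b \<le> n \<Longrightarrow> a \<noteq> b \<Longrightarrow> 0 \<le> W a b" for a b unfolding W_def by (rule W_nonneg)
  have ne0: "a0 \<noteq> b0" using W_pos_ne ex(3) by blast
  obtain i j where ij: "i \<le> n" "j \<le> n" "0 < W i j" "s i - s j = 2"
  proof (cases "s a0 - s b0 = 2")
    case True then show ?thesis using that ex unfolding W_def by blast
  next
    case False
    then have "s b0 - s a0 = 2" using ex(4) by auto
    then show ?thesis using that ex Wsym[of a0 b0] unfolding W_def by auto
  qed
  have nij: "i \<noteq> j" using ij(4) by auto
  define t where "t = s i"
  define S1 where "S1 = {a. t \<le> s a}"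
  define S2 where "S2 = {a. t - 1 \<le> s a}"
  define D where "D a b = s a - s b" for a b
  have lowE: "4 \<le> PS n (\<lambda>a b. W a b * (D a b * D a b - \<bar>D a b\<bar>))"
  proof -
    have nn: "0 \<le> W a b * (D a b * D a b - \<bar>D a b\<bar>)" if "a \<le> n" "b \<le> n" for a b
    proof (cases "a = b")
      case True then show ?thesis by (simp add: D_def)
    next
      case False
      have "\<bar>D a b\<bar> \<le> D a b * D a b" using abs_zp[of 1 "D a b"] by simp
      then show ?thesis using Wnn[OF that False] by simp
    qed
    have "W i j * (D i j * D i j - \<bar>D i j\<bar>) + W j i * (D j i * D j i - \<bar>D j i\<bar>)
        \<le> PS n (\<lambda>a b. W a b * (D a b * D a b - \<bar>D a b\<bar>))"
      using ij nij nn by (intro PS_two) auto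
    moreover have "D i j = 2" "D j i = -2" using ij(4) unfolding D_def by auto
    ultimately have "4 * W i j \<le> PS n (\<lambda>a b. W a b * (D a b * D a b - \<bar>D a b\<bar>))"
      using Wsym[of i j] by simp
    then show ?thesis using ij(3) by linarith
  qed
  have "PS n (\<lambda>a b. W a b * (D a b * D a b - \<bar>D a b\<bar>)) =
      PS n (\<lambda>a b. W a b * (D a b * D a b)) - PS n (\<lambda>a b. W a b * \<bar>D a b\<bar>)"
    unfolding PS_diff[symmetric] by (simp add: right_diff_distrib)
  moreover have "PS n (\<lambda>a b. W a b * (D a b * D a b)) = 8" using ss unfolding W_def D_def by (simp add: mult.assoc)
  ultimately have absle: "PS n (\<lambda>a b. W a b * \<bar>D a b\<bar>) \<le> 4" using lowE by linarith
  have "PS n (\<lambda>a b. WW r v a b * (ind S1 a - ind S1 b) * (ind S1 a - ind S1 b)) +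
        PS n (\<lambda>a b. WW r v a b * (ind S2 a - ind S2 b) * (ind S2 a - ind S2 b))
      \<le> PS n (\<lambda>a b. W a b * \<bar>D a b\<bar>)"
    unfolding PS_add[symmetric]
  proof (rule PS_mono)
    fix a b assume ab: "a \<le> n" "b \<le> n"
    show "WW r v a b * (ind S1 a - ind S1 b) * (ind S1 a - ind S1 b) +
          WW r v a b * (ind S2 a - ind S2 b) * (ind S2 a - ind S2 b) \<le> W a b * \<bar>D a b\<bar>"
    proof (cases "a = b")
      case True then show ?thesis by (simp add: D_def)
    next
      case False
      have "WW r v a b * (ind S1 a - ind S1 b) * (ind S1 a - ind S1 b) +
          WW r v a b * (ind S2 a - ind S2 b) * (ind S2 a - ind S2 b) =
          W a b * ((ind S1 a - ind S1 b) * (ind S1 a - ind S1 b) + (ind S2 a - ind S2 b) * (ind S2 a - ind S2 b))"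
        unfolding W_def by (simp add: algebra_simps)
      also have "\<dots> \<le> W a b * \<bar>D a b\<bar>"
        using Wnn[OF ab False] cross2[of t "s a" "s b"]
        unfolding ind_def S1_def S2_def D_def by (intro mult_left_mono) auto
      finally show ?thesis .
    qed
  qed
  then have sum2: "2 * pairing r (vc v n (ind S1)) (vc v n (ind S1)) + 2 * pairing r (vc v n (ind S2)) (vc v n (ind S2)) \<le> 4"
    using absle unfolding formula by linarith
  have "1 \<le> pairing r (vc v n (ind S1)) (vc v n (ind S1))"
    using ij unfolding W_def S1_def t_def by (intro ind_norm_ge[of i j]) auto
  moreover have "1 \<le> pairing r (vc v n (ind S2)) (vc v n (ind S2))"
    using ij unfolding W_def S2_def t_def by (intro ind_norm_ge[of i j]) auto
  ultimately have "pairing r (vc v n (ind S1)) (vc v n (ind S1)) = 1" using sum2 by linarith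
  then show False using no1 vc_in[of "ind S1"] by blast
qed


lemma ptw:
  fixes Z A P B :: int
  assumes "\<bar>Z\<bar> \<le> 1" "\<bar>A\<bar> \<le> 1" "\<bar>P\<bar> \<le> 1" "\<bar>B\<bar> \<le> 1"
    and "Z * P = 0" "Z * A = 0" "\<not> (A = P \<and> A \<noteq> 0)"
  shows "\<bar>Z * B\<bar> + \<bar>A * B\<bar> + \<bar>P * B\<bar> + A * P \<le> B * B"
proof -
  have Av: "A \<in> {-1,0,1}" and Pv: "P \<in> {-1,0,1}" and Bv: "B \<in> {-1,0,1}" using assms(2-4) by auto
  have AP: "A * P \<le> 0" using Av Pv assms(7) by auto
  have BB: "B * B = \<bar>B\<bar>" using Bv by auto
  have e: "\<bar>Z * B\<bar> + \<bar>A * B\<bar> + \<bar>P * B\<bar> = (\<bar>Z\<bar> + \<bar>A\<bar> + \<bar>P\<bar>) * \<bar>B\<bar>"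
    by (simp add: abs_mult algebra_simps)
  have s1: "\<bar>Z\<bar> + \<bar>A\<bar> + \<bar>P\<bar> + A * P \<le> 1"
  proof (cases "Z = 0")
    case True then show ?thesis using Av Pv assms(7) by auto
  next
    case False then have "A = 0" "P = 0" using assms(5,6) by auto
    then show ?thesis using assms(1) by simp
  qed
  have "\<bar>B\<bar> = 0 \<or> \<bar>B\<bar> = 1" using Bv by auto
  then show ?thesis
  proof
    assume "\<bar>B\<bar> = 0" then show ?thesis using AP by simp
  next
    assume "\<bar>B\<bar> = 1" then show ?thesis using s1 e BB by simp
  qed
qed

lemma PS_absW:
  assumes "\<And>a. a \<le> n \<Longrightarrow> F a a = 0"
  shows "\<bar>PS n (\<lambda>a b. WW r v a b * F a b)\<bar> \<le> PS n (\<lambda>a b. WW r v a b * \<bar>F a b\<bar>)"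
proof -
  have "\<bar>PS n (\<lambda>a b. WW r v a b * F a b)\<bar> \<le> PS n (\<lambda>a b. \<bar>WW r v a b * F a b\<bar>)" by (rule PS_abs)
  also have "\<dots> = PS n (\<lambda>a b. WW r v a b * \<bar>F a b\<bar>)"
  proof (rule PS_cong)
    fix a b assume ab: "a \<le> n" "b \<le> n"
    show "\<bar>WW r v a b * F a b\<bar> = WW r v a b * \<bar>F a b\<bar>"
    proof (cases "a = b")
      case True then show ?thesis using assms ab by simp
    next
      case False then show ?thesis using W_nonneg[OF ab False] by (simp add: abs_mult)
    qed
  qed
  finally show ?thesis .
qed

lemma final:
  assumes no1: "\<forall>x\<in>orth_lattice r \<sigma>. pairing r x x \<noteq> 1"
    and irr: "irreducible_vec r (orth_lattice r \<sigma>) (vc v n (ind X))"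
    and za: "PS n (\<lambda>i j. WW r v i j * (ind X i - ind X j) * (a i - a j)) = 0"
    and zp: "PS n (\<lambda>i j. WW r v i j * (ind X i - ind X j) * (p i - p j)) = 0"
    and zb: "PS n (\<lambda>i j. WW r v i j * (ind X i - ind X j) * (b i - b j)) = 2 * d"
    and d0: "d \<noteq> 0"
    and aa: "PS n (\<lambda>i j. WW r v i j * (a i - a j) * (a i - a j)) = 4"
    and pp: "PS n (\<lambda>i j. WW r v i j * (p i - p j) * (p i - p j)) = 4"
    and bb: "PS n (\<lambda>i j. WW r v i j * (b i - b j) * (b i - b j)) = 4"
    and ab: "PS n (\<lambda>i j. WW r v i j * (a i - a j) * (b i - b j)) = 2"
    and pb: "PS n (\<lambda>i j. WW r v i j * (p i - p j) * (b i - b j)) = -2"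
    and ap: "PS n (\<lambda>i j. WW r v i j * (a i - a j) * (p i - p j)) = 0"
    and ss: "PS n (\<lambda>i j. WW r v i j * ((a i + p i) - (a j + p j)) * ((a i + p i) - (a j + p j))) = 8"
  shows False
proof -
  define W where "W = WW r v"
  define Z where "Z i j = ind X i - ind X j" for i j
  define A where "A i j = a i - a j" for i j
  define P where "P i j = p i - p j" for i j
  define B where "B i j = b i - b j" for i j
  have Ab: "i \<le> n \<Longrightarrow> j \<le> n \<Longrightarrow> 0 < W i j \<Longrightarrow> \<bar>A i j\<bar> \<le> 1" for i j
    unfolding W_def A_def using root_bound[OF aa] by blast
  have Pb: "i \<le> n \<Longrightarrow> j \<le> n \<Longrightarrow> 0 < W i j \<Longrightarrow> \<bar>P i j\<bar> \<le> 1" for i j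
    unfolding W_def P_def using root_bound[OF pp] by blast
  have Bb: "i \<le> n \<Longrightarrow> j \<le> n \<Longrightarrow> 0 < W i j \<Longrightarrow> \<bar>B i j\<bar> \<le> 1" for i j
    unfolding W_def B_def using root_bound[OF bb] by blast
  have Zb: "\<bar>Z i j\<bar> \<le> 1" for i j unfolding Z_def ind_def by auto
  show False
  proof (cases "\<exists>i j. i \<le> n \<and> j \<le> n \<and> 0 < W i j \<and> Z i j * P i j \<noteq> 0")
    case True
    then obtain i j where "i \<le> n" "j \<le> n" "0 < WW r v i j" "(ind X i - ind X j) * (p i - p j) \<noteq> 0"
      unfolding W_def Z_def P_def by blast
    then show False using lemD[OF no1 irr pp zp] by blast
  next
    case nI: False
    show False
    proof (cases "\<exists>i j. i \<le> n \<and> j \<le> n \<and> 0 < W i j \<and> Z i j * A i j \<noteq> 0")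
      case True
      then obtain i j where "i \<le> n" "j \<le> n" "0 < WW r v i j" "(ind X i - ind X j) * (a i - a j) \<noteq> 0"
        unfolding W_def Z_def A_def by blast
      then show False using lemD[OF no1 irr aa za] by blast
    next
      case nII: False
      show False
      proof (cases "\<exists>i j. i \<le> n \<and> j \<le> n \<and> 0 < W i j \<and> A i j = P i j \<and> A i j \<noteq> 0")
        case True
        then obtain i j where ij: "i \<le> n" "j \<le> n" "0 < W i j" "A i j = P i j" "A i j \<noteq> 0" by blast
        then have "\<bar>A i j\<bar> = 1" using Ab[OF ij(1-3)] by linarith
        then have "\<bar>(a i + p i) - (a j + p j)\<bar> = 2" using ij(4) unfolding A_def P_def by linarith
        then show False using lemE[OF no1 ss, of i j] ij unfolding W_def by blast
      next
        case nIII: False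
        have pt: "W i j * (\<bar>Z i j * B i j\<bar> + \<bar>A i j * B i j\<bar> + \<bar>P i j * B i j\<bar> + A i j * P i j)
                  \<le> W i j * (B i j * B i j)" if ij: "i \<le> n" "j \<le> n" for i j
        proof (cases "0 < W i j")
          case False
          then have "i = j \<or> W i j = 0" using W_nonneg[OF ij] unfolding W_def by fastforce
          then show ?thesis unfolding A_def B_def P_def Z_def by auto
        next
          case True
          have "\<bar>Z i j * B i j\<bar> + \<bar>A i j * B i j\<bar> + \<bar>P i j * B i j\<bar> + A i j * P i j \<le> B i j * B i j"
            using ptw[OF Zb Ab[OF ij True] Pb[OF ij True] Bb[OF ij True]] nI nII nIII ij True by blast
          then show ?thesis using True by (intro mult_left_mono) auto
        qed
        have "PS n (\<lambda>i j. W i j * \<bar>Z i j * B i j\<bar>) + PS n (\<lambda>i j. W i j * \<bar>A i j * B i j\<bar>)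
            + PS n (\<lambda>i j. W i j * \<bar>P i j * B i j\<bar>) + PS n (\<lambda>i j. W i j * (A i j * P i j))
            \<le> PS n (\<lambda>i j. W i j * (B i j * B i j))"
          unfolding PS_add[symmetric] using pt by (intro PS_mono) (simp add: algebra_simps)
        moreover have "\<bar>2 * d\<bar> \<le> PS n (\<lambda>i j. W i j * \<bar>Z i j * B i j\<bar>)"
          using PS_absW[of "\<lambda>i j. Z i j * B i j"] zb unfolding W_def Z_def B_def by (simp add: mult.assoc)
        moreover have "2 \<le> PS n (\<lambda>i j. W i j * \<bar>A i j * B i j\<bar>)"
          using PS_absW[of "\<lambda>i j. A i j * B i j"] ab unfolding W_def A_def B_def by (simp add: mult.assoc)
        moreover have "2 \<le> PS n (\<lambda>i j. W i j * \<bar>P i j * B i j\<bar>)"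
          using PS_absW[of "\<lambda>i j. P i j * B i j"] pb unfolding W_def P_def B_def by (simp add: mult.assoc)
        moreover have "PS n (\<lambda>i j. W i j * (A i j * P i j)) = 0"
          using ap unfolding W_def A_def P_def by (simp add: mult.assoc)
        moreover have "PS n (\<lambda>i j. W i j * (B i j * B i j)) = 4"
          using bb unfolding W_def B_def by (simp add: mult.assoc)
        ultimately show False using d0 by linarith
      qed
    qed
  qed
qed

end


lemma sigma_pos:
  assumes cm: "changemaker r \<sigma>"
  shows "i \<in> {1..r} \<Longrightarrow> 1 \<le> \<sigma> i"
proof (induction i)
  case 0 then show ?case by simp
next
  case (Suc m)
  show ?case
  proof (cases "m = 0")
    case True then show ?thesis using cm unfolding changemaker_def by simp
  next
    case False
    have "\<forall>i. 2 \<le> i \<and> i \<le> r \<longrightarrow> \<sigma> (i - 1) \<le> \<sigma> i" using cm unfolding changemaker_def by blast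
    moreover have "2 \<le> Suc m \<and> Suc m \<le> r" using False Suc.prems by auto
    ultimately have "\<sigma> (Suc m - 1) \<le> \<sigma> (Suc m)" by blast
    then have "\<sigma> m \<le> \<sigma> (Suc m)" by simp
    moreover have "1 \<le> \<sigma> m" using Suc False by auto
    ultimately show ?thesis by simp
  qed
qed

lemma no_norm1:
  assumes pos: "\<And>i. i \<in> {1..r} \<Longrightarrow> 1 \<le> \<sigma> i"
  shows "\<forall>x\<in>orth_lattice r \<sigma>. pairing r x x \<noteq> 1"
proof (intro ballI notI)
  fix x assume xL: "x \<in> orth_lattice r \<sigma>" and x1: "pairing r x x = 1"
  have s1: "(\<Sum>i\<in>{1..r}. x i * x i) = 1" using x1 unfolding pairing_def by simp
  have s0: "(\<Sum>i\<in>{1..r}. x i * \<sigma> i) = 0" using xL unfolding orth_lattice_def pairing_def by simp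
  obtain i0 where i0: "i0 \<in> {1..r}" "x i0 \<noteq> 0"
  proof (rule ccontr)
    assume "\<not> thesis"
    then have "\<forall>i\<in>{1..r}. x i = 0" using that by blast
    then show False using s1 by simp
  qed
  have "1 \<le> x i0 * x i0" using i0(2) by (metis abs_mult_self_eq abs_ge_zero linorder_not_le mult_le_cancel_left1 zero_less_abs_iff order_trans zle_add1_eq_le zle_diff1_eq int_one_le_iff_zero_less zero_less_mult_iff)
  moreover have "s1'": "x i0 * x i0 + (\<Sum>i\<in>{1..r} - {i0}. x i * x i) = 1"
    using s1 i0(1) by (simp add: sum.remove)
  moreover have "0 \<le> (\<Sum>i\<in>{1..r} - {i0}. x i * x i)" by (intro sum_nonneg) simp
  ultimately have "(\<Sum>i\<in>{1..r} - {i0}. x i * x i) = 0" by linarith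
  then have z: "\<forall>i\<in>{1..r} - {i0}. x i = 0" by (subst (asm) sum_nonneg_eq_0_iff) auto
  have "(\<Sum>i\<in>{1..r}. x i * \<sigma> i) = x i0 * \<sigma> i0 + (\<Sum>i\<in>{1..r} - {i0}. x i * \<sigma> i)"
    using i0(1) by (simp add: sum.remove)
  also have "(\<Sum>i\<in>{1..r} - {i0}. x i * \<sigma> i) = 0" using z by simp
  finally have "x i0 * \<sigma> i0 = 0" using s0 by simp
  then show False using i0 pos[OF i0(1)] by simp
qed

theorem proposition4p8:
  fixes r k :: nat and \<sigma> z :: "nat \<Rightarrow> int"
  assumes "changemaker r \<sigma>"
    and "\<sigma> r \<ge> 2"
    and "\<exists>v. obtuse_superbase r (orth_lattice r \<sigma>) (r - 1) v"
    and "1 \<le> k" and "k + 3 \<le> r"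
    and "\<sigma> k = \<sigma> (k+1)" and "\<sigma> (k+1) = \<sigma> (k+2)" and "\<sigma> (k+2) = \<sigma> (k+3)"
    and "irreducible_vec r (orth_lattice r \<sigma>) z"
    and "z k = z (k+1)" and "z (k+2) = z (k+3)"
  shows "z (k+2) = z (k+1)"
proof (rule ccontr)
  assume dne: "z (k+2) \<noteq> z (k+1)"
  define L where "L = orth_lattice r \<sigma>"
  define n where "n = r - 1"
  obtain v where sb: "obtuse_superbase r L n v" using assms(3) unfolding L_def n_def by blast
  have vin: "\<forall>i\<le>n. v i \<in> orth_lattice r \<sigma>"
    and vspan: "\<forall>z\<in>orth_lattice r \<sigma>. \<exists>c :: nat \<Rightarrow> int. z = (\<lambda>j. \<Sum>i\<le>n. c i * v i j)"
    and vobt: "\<forall>i\<le>n. \<forall>j\<le>n. i \<noteq> j \<longrightarrow> pairing r (v i) (v j) \<le> 0"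
    and vsum: "(\<lambda>j. \<Sum>i\<le>n. v i j) = (\<lambda>j. 0)"
    using sb unfolding obtuse_superbase_def L_def by auto
  note ctx = vin vspan vobt vsum
  have no1: "\<forall>x\<in>orth_lattice r \<sigma>. pairing r x x \<noteq> 1"
    using no_norm1 sigma_pos[OF assms(1)] by blast
  have kr: "k \<in> {1..r}" "k+1 \<in> {1..r}" "k+2 \<in> {1..r}" "k+3 \<in> {1..r}" using assms(4,5) by auto
  define al where "al = (\<lambda>j. ee (k+1) j - ee k j)"
  define rh where "rh = (\<lambda>j. ee (k+3) j - ee (k+2) j)"
  define be where "be = (\<lambda>j. ee (k+2) j - ee k j)"
  have pe: "pairing r x (\<lambda>j. ee a j - ee b j) = x a - x b" if "a \<in> {1..r}" "b \<in> {1..r}" for x a b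
    using that by (simp add: pairing_diff2 pairing_ee)
  have inL: "(\<lambda>j. ee a j - ee b j) \<in> orth_lattice r \<sigma>" if "a \<in> {1..r}" "b \<in> {1..r}" "\<sigma> a = \<sigma> b" for a b
    using that pe[OF that(1,2), of \<sigma>] unfolding orth_lattice_def zvec_def
    by (auto simp: ee_def pairing_sym[of r _ \<sigma>])
  have alL: "al \<in> orth_lattice r \<sigma>" unfolding al_def using inL[OF kr(2) kr(1)] assms(6) by simp
  have rhL: "rh \<in> orth_lattice r \<sigma>" unfolding rh_def using inL[OF kr(4) kr(3)] assms(8) by simp
  have beL: "be \<in> orth_lattice r \<sigma>" unfolding be_def using inL[OF kr(3) kr(1)] assms(6,7) by simp
  obtain X where zX: "z = vc v n (ind X)" using cut_rep[OF ctx assms(9)] by blast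
  obtain a where aa: "al = vc v n a" using vc_span[OF ctx alL] by blast
  obtain p where pp: "rh = vc v n p" using vc_span[OF ctx rhL] by blast
  obtain b where bb: "be = vc v n b" using vc_span[OF ctx beL] by blast
  have sp: "vc v n (\<lambda>i. a i + p i) = (\<lambda>j. al j + rh j)" using vc_add[OF ctx] aa pp by simp
  note F = formula[OF ctx]
  have pal: "pairing r x al = x (k+1) - x k" for x unfolding al_def using kr by (intro pe) auto
  have prh: "pairing r x rh = x (k+3) - x (k+2)" for x unfolding rh_def using kr by (intro pe) auto
  have pbe: "pairing r x be = x (k+2) - x k" for x unfolding be_def using kr by (intro pe) auto
  show False
  proof (rule final[OF ctx no1, of X a p b "z (k+2) - z (k+1)"])
    show "irreducible_vec r (orth_lattice r \<sigma>) (vc v n (ind X))" using assms(9) zX by simp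
    show "PS n (\<lambda>i j. WW r v i j * (ind X i - ind X j) * (a i - a j)) = 0"
      unfolding F zX[symmetric] aa[symmetric] pal using assms(10) by simp
    show "PS n (\<lambda>i j. WW r v i j * (ind X i - ind X j) * (p i - p j)) = 0"
      unfolding F zX[symmetric] pp[symmetric] prh using assms(11) by simp
    show "PS n (\<lambda>i j. WW r v i j * (ind X i - ind X j) * (b i - b j)) = 2 * (z (k+2) - z (k+1))"
      unfolding F zX[symmetric] bb[symmetric] pbe using assms(10) by simp
    show "z (k+2) - z (k+1) \<noteq> 0" using dne by simp
    show "PS n (\<lambda>i j. WW r v i j * (a i - a j) * (a i - a j)) = 4"
      unfolding F aa[symmetric] pal by (simp add: al_def ee_def)
    show "PS n (\<lambda>i j. WW r v i j * (p i - p j) * (p i - p j)) = 4"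
      unfolding F pp[symmetric] prh by (simp add: rh_def ee_def)
    show "PS n (\<lambda>i j. WW r v i j * (b i - b j) * (b i - b j)) = 4"
      unfolding F bb[symmetric] pbe by (simp add: be_def ee_def)
    show "PS n (\<lambda>i j. WW r v i j * (a i - a j) * (b i - b j)) = 2"
      unfolding F aa[symmetric] bb[symmetric] pbe by (simp add: al_def ee_def)
    show "PS n (\<lambda>i j. WW r v i j * (p i - p j) * (b i - b j)) = -2"
      unfolding F pp[symmetric] bb[symmetric] pbe by (simp add: rh_def ee_def)
    show "PS n (\<lambda>i j. WW r v i j * (a i - a j) * (p i - p j)) = 0"
      unfolding F aa[symmetric] pp[symmetric] prh by (simp add: al_def ee_def)
    show "PS n (\<lambda>i j. WW r v i j * ((a i + p i) - (a j + p j)) * ((a i + p i) - (a j + p j))) = 8"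
      using F[of "\<lambda>i. a i + p i" "\<lambda>i. a i + p i"] unfolding sp pairing_add2 pal prh
      by (simp add: al_def rh_def ee_def)
  qed
qed

end
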